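(* Let $q\ge1$ be an integer. Suppose there are constants $\varepsilon,\delta>0$ and a Borel set $K\subset[0,1)$ such that: (i) $e(q,x;\varepsilon,\delta)\le1$ for $x\in K$ and $e(q,x;\varepsilon,\delta)\le2$ for $x\in[0,1)\setminus K$; (ii) if $(\mathbf{u},\mathbf{v})\in E(q,x;\varepsilon,\delta)$ for some $x\in[0,1)\setminus K$ with $\mathbf{u}\ne\mathbf{v}$, then $x(\mathbf{u})\in K$ or $x(\mathbf{v})\in K$. Then $\sigma(q)\le(\sqrt5+1)/2$.
   Context: Standing setup: $b\ge2$ integer, $\mathcal{A}=\{0,\dots,b-1\}$, $\gamma\in(1/b,1)$, $\psi$ a $\mathbb{Z}$-periodic $C^1$ function. $S(x,\mathbf{i})=\sum_{n\ge1}\gamma^{n-1}\psi\big(\frac{x+i_1+i_2b+\cdots+i_nb^{n-1}}{b^n}\big)$, $S'=\partial_xS$. For $\mathbf{u}\in\mathcal{A}^q$, $x(\mathbf{u})=(x+u_1+u_2b+\cdots+u_qb^{q-1})/b^q$. Sequences $\mathbf{i},\mathbf{j}$ are $(\varepsilon,\delta)$-tangent at $x_0$ if $|S(x_0,\mathbf{i})-S(x_0,\mathbf{j})|\le\varepsilon$ and $|S'(x_0,\mathbf{i})-S'(x_0,\mathbf{j})|\le\delta$. $E(q,x_0;\varepsilon,\delta)$: pairs $(\mathbf{k},\mathbf{l})\in\mathcal{A}^q\times\mathcal{A}^q$ such that some concatenations $\mathbf{ku},\mathbf{lv}$ are $(\varepsilon,\delta)$-tangent at $x_0$; $e(q,x_0;\varepsilon,\delta)=\max_{\mathbf{k}}\#\{\mathbf{l}:(\mathbf{k},\mathbf{l})\in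 E(q,x_0;\varepsilon,\delta)\}$. Weight function: measurable $\omega:[0,1)\to(0,\infty)$ with $\omega,1/\omega$ bounded. Admissible testing function of order $q$: measurable $V:[0,1)\times\mathcal{A}^q\times\mathcal{A}^q\to[0,\infty)$ such that for some $\varepsilon,\delta>0$, $V(x,\mathbf{u},\mathbf{v})V(x,\mathbf{v},\mathbf{u})\ge1$ whenever $x\in[0,1)$ and $(\mathbf{u},\mathbf{v})\in E(q,x;\varepsilon,\delta)$. $\Sigma_{V,\omega}(x)=\sup_{\mathbf{u}}\frac{\omega(x)}{\omega(x(\mathbf{u}))}\sum_{\mathbf{v}}V(x,\mathbf{u},\mathbf{v})$; $\sigma(q)=\inf_{\omega,V}\|\Sigma_{V,\omega}\|_\infty$. *)

theory Defs
  imports "HOL-Analysis.Analysis" "HOL-Probability.Essential_Supremum"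
begin

text \<open>Infinite sequences over the alphabet {0,...,b-1}, indexed from 0
  (so i 0 is the paper's i_1).\<close>
definition seqs :: "nat \<Rightarrow> (nat \<Rightarrow> nat) set" where
  "seqs b = {i. \<forall>n. i n < b}"

text \<open>Finite words of length q over the alphabet, as lists (u ! 0 = u_1).\<close>
definition words :: "nat \<Rightarrow> nat \<Rightarrow> nat list set" where
  "words b q = {u. length u = q \<and> (\<forall>a\<in>set u. a < b)}"

definition concat_seq :: "nat list \<Rightarrow> (nat \<Rightarrow> nat) \<Rightarrow> (nat \<Rightarrow> nat)" where
  "concat_seq k u = (\<lambda>n. if n < length k then k ! n else u (n - length k))"

definition S :: "nat \<Rightarrow> real \<Rightarrow> (real \<Rightarrow> real) \<Rightarrow> real \<Rightarrow> (nat \<Rightarrow> nat) \<Rightarrow> real" where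
  "S b \<gamma> \<psi> x i =
     (\<Sum>n. \<gamma> ^ n * \<psi> ((x + (\<Sum>k<Suc n. real (i k) * real b ^ k)) / real b ^ Suc n))"

definition S' :: "nat \<Rightarrow> real \<Rightarrow> (real \<Rightarrow> real) \<Rightarrow> real \<Rightarrow> (nat \<Rightarrow> nat) \<Rightarrow> real" where
  "S' b \<gamma> \<psi> x i = deriv (\<lambda>y. S b \<gamma> \<psi> y i) x"

definition xw :: "nat \<Rightarrow> real \<Rightarrow> nat list \<Rightarrow> real" where
  "xw b x u = (x + (\<Sum>k<length u. real (u ! k) * real b ^ k)) / real b ^ length u"

definition tangent ::
  "nat \<Rightarrow> real \<Rightarrow> (real \<Rightarrow> real) \<Rightarrow> real \<Rightarrow> real \<Rightarrow> real \<Rightarrow> (nat \<Rightarrow> nat) \<Rightarrow> (nat \<Rightarrow> nat) \<Rightarrow> bool" where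
  "tangent b \<gamma> \<psi> \<epsilon> \<delta> x0 i j \<longleftrightarrow>
     \<bar>S b \<gamma> \<psi> x0 i - S b \<gamma> \<psi> x0 j\<bar> \<le> \<epsilon> \<and> \<bar>S' b \<gamma> \<psi> x0 i - S' b \<gamma> \<psi> x0 j\<bar> \<le> \<delta>"

definition Eset ::
  "nat \<Rightarrow> real \<Rightarrow> (real \<Rightarrow> real) \<Rightarrow> nat \<Rightarrow> real \<Rightarrow> real \<Rightarrow> real \<Rightarrow> (nat list \<times> nat list) set" where
  "Eset b \<gamma> \<psi> q x0 \<epsilon> \<delta> =
     {(k, l). k \<in> words b q \<and> l \<in> words b q \<and>
        (\<exists>u\<in>seqs b. \<exists>v\<in>seqs b. tangent b \<gamma> \<psi> \<epsilon> \<delta> x0 (concat_seq k u) (concat_seq l v))}"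

definition e_num ::
  "nat \<Rightarrow> real \<Rightarrow> (real \<Rightarrow> real) \<Rightarrow> nat \<Rightarrow> real \<Rightarrow> real \<Rightarrow> real \<Rightarrow> nat" where
  "e_num b \<gamma> \<psi> q x0 \<epsilon> \<delta> =
     Max ((\<lambda>k. card {l. (k, l) \<in> Eset b \<gamma> \<psi> q x0 \<epsilon> \<delta>}) ` words b q)"

definition weight_fun :: "(real \<Rightarrow> real) \<Rightarrow> bool" where
  "weight_fun \<omega> \<longleftrightarrow>
     \<omega> \<in> borel_measurable (restrict_space lebesgue {0..<1}) \<and>
     (\<forall>x\<in>{0..<1}. 0 < \<omega> x) \<and>
     (\<exists>C. \<forall>x\<in>{0..<1}. \<omega> x \<le> C \<and> 1 / \<omega> x \<le> C)"

definition admissible_test ::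
  "nat \<Rightarrow> real \<Rightarrow> (real \<Rightarrow> real) \<Rightarrow> nat \<Rightarrow> (real \<Rightarrow> nat list \<Rightarrow> nat list \<Rightarrow> real) \<Rightarrow> bool" where
  "admissible_test b \<gamma> \<psi> q V \<longleftrightarrow>
     (\<forall>u\<in>words b q. \<forall>v\<in>words b q.
        (\<lambda>x. V x u v) \<in> borel_measurable (restrict_space lebesgue {0..<1})) \<and>
     (\<forall>x\<in>{0..<1}. \<forall>u\<in>words b q. \<forall>v\<in>words b q. 0 \<le> V x u v) \<and>
     (\<exists>\<epsilon>>0. \<exists>\<delta>>0. \<forall>x\<in>{0..<1}. \<forall>(u, v)\<in>Eset b \<gamma> \<psi> q x \<epsilon> \<delta>.
        V x u v * V x v u \<ge> 1)"

definition Sigma_Vw ::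
  "nat \<Rightarrow> nat \<Rightarrow> (real \<Rightarrow> nat list \<Rightarrow> nat list \<Rightarrow> real) \<Rightarrow> (real \<Rightarrow> real) \<Rightarrow> real \<Rightarrow> real" where
  "Sigma_Vw b q V \<omega> x =
     Max ((\<lambda>u. \<omega> x / \<omega> (xw b x u) * (\<Sum>v\<in>words b q. V x u v)) ` words b q)"

definition sigma_q :: "nat \<Rightarrow> real \<Rightarrow> (real \<Rightarrow> real) \<Rightarrow> nat \<Rightarrow> ereal" where
  "sigma_q b \<gamma> \<psi> q =
     Inf {esssup (restrict_space lebesgue {0..<1}) (\<lambda>x. ereal (Sigma_Vw b q V \<omega> x)) | \<omega> V.
            weight_fun \<omega> \<and> admissible_test b \<gamma> \<psi> q V}"

end

theory Submission
  imports Defs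
begin


definition argf :: "nat \<Rightarrow> real \<Rightarrow> (nat \<Rightarrow> nat) \<Rightarrow> nat \<Rightarrow> real" where
  "argf b x i n = (x + (\<Sum>k<Suc n. real (i k) * real b ^ k)) / real b ^ Suc n"

definition Gd :: "nat \<Rightarrow> real \<Rightarrow> (real \<Rightarrow> real) \<Rightarrow> real \<Rightarrow> (nat \<Rightarrow> nat) \<Rightarrow> real" where
  "Gd b \<gamma> D x i = (\<Sum>n. \<gamma> ^ n * D (argf b x i n) / real b ^ Suc n)"

lemma S_alt: "S b \<gamma> \<psi> x i = (\<Sum>n. \<gamma> ^ n * \<psi> (argf b x i n))"
  by (simp add: S_def argf_def)

lemma digits_le:
  assumes "1 \<le> b" "\<forall>n. i n < b"
  shows "(\<Sum>k<N. real (i k) * real b ^ k) \<le> real b ^ N - 1"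
proof (induction N)
  case 0 then show ?case by simp
next
  case (Suc N)
  have "i N + 1 \<le> b" using assms(2)[rule_format, of N] by simp
  then have "real (i N + 1) \<le> real b" by (simp only: of_nat_le_iff)
  then have "real (i N) \<le> real b - 1" by simp
  then have "real (i N) * real b ^ N \<le> (real b - 1) * real b ^ N"
    by (intro mult_right_mono) auto
  with Suc show ?case by (simp add: algebra_simps)
qed

lemma argf_range:
  assumes "2 \<le> b" "\<forall>n. i n < b" "-1 \<le> x" "x \<le> 2"
  shows "-1 \<le> argf b x i n \<and> argf b x i n \<le> 2"
proof -
  define B where "B = real b ^ Suc n"
  define c where "c = (\<Sum>k<Suc n. real (i k) * real b ^ k)"
  have B1: "1 \<le> B" unfolding B_def using assms(1) by (intro one_le_power) simp
  have c0: "0 \<le> c" unfolding c_def by (intro sum_nonneg) auto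
  have c1: "c \<le> B - 1" unfolding c_def B_def using digits_le[of b i "Suc n"] assms by auto
  have a: "argf b x i n = (x + c) / B" by (simp add: argf_def B_def c_def)
  have "-1 \<le> (x + c) / B" using B1 c0 assms by (simp add: le_divide_eq)
  moreover have "(x + c) / B \<le> 2" using B1 c1 assms by (simp add: divide_le_eq)
  ultimately show ?thesis using a by simp
qed

lemma cont_bound:
  fixes f :: "real \<Rightarrow> real"
  assumes "continuous_on {-1..2} f"
  shows "\<exists>M. \<forall>y\<in>{-1..2}. \<bar>f y\<bar> \<le> M"
proof -
  have "compact (f ` {-1..2})" by (intro compact_continuous_image assms) auto
  then have "bounded (f ` {-1..2})" by (rule compact_imp_bounded)
  then show ?thesis unfolding bounded_iff by auto
qed

lemma cont_coord [continuous_intros]: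
  "continuous_on A (\<lambda>p::'a::topological_space \<times> ('b \<Rightarrow> 'c::topological_space). snd p k)"
  by (rule continuous_on_compose2[OF continuous_on_product_coordinates continuous_on_snd]) auto

context
  fixes b :: nat and \<gamma> :: real and \<psi> D :: "real \<Rightarrow> real"
  assumes b2: "2 \<le> b" and \<gamma>0: "0 < \<gamma>" and \<gamma>1: "\<gamma> < 1"
    and \<psi>D: "\<And>x. (\<psi> has_real_derivative D x) (at x)"
    and Dcont: "continuous_on UNIV D"
begin

lemma psi_cont: "continuous_on UNIV \<psi>"
  using \<psi>D by (meson DERIV_isCont continuous_at_imp_continuous_on)

lemma summ_geo: "summable (\<lambda>n. \<gamma> ^ n * M)"
  using \<gamma>0 \<gamma>1 by (intro summable_mult2 summable_geometric) auto

lemma term_deriv: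
  "((\<lambda>y. \<gamma> ^ n * \<psi> (argf b y i n)) has_real_derivative
      \<gamma> ^ n * D (argf b x i n) / real b ^ Suc n) (at x)"
proof -
  have "((\<lambda>y. argf b y i n) has_real_derivative 1 / real b ^ Suc n) (at x)"
    unfolding argf_def using b2 by (auto intro!: derivative_eq_intros)
  from DERIV_chain2[OF \<psi>D this]
  have "((\<lambda>y. \<psi> (argf b y i n)) has_real_derivative D (argf b x i n) * (1 / real b ^ Suc n)) (at x)" .
  from DERIV_cmult[OF this, of "\<gamma> ^ n"] show ?thesis by simp
qed

lemma S'_eq:
  assumes x: "-1 < x" "x < 2" and i: "\<forall>n. i n < b"
  shows "S' b \<gamma> \<psi> x i = Gd b \<gamma> D x i"
proof -
  obtain MD where MD: "\<forall>y\<in>{-1..2}. \<bar>D y\<bar> \<le> MD"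
    using cont_bound[of D] Dcont continuous_on_subset by blast
  obtain Mp where Mp: "\<forall>y\<in>{-1..2}. \<bar>\<psi> y\<bar> \<le> Mp"
    using cont_bound[of \<psi>] psi_cont continuous_on_subset by blast
  let ?S = "{-1<..<2::real}"
  have uc: "uniformly_convergent_on ?S (\<lambda>n y. \<Sum>m<n. \<gamma> ^ m * D (argf b y i m) / real b ^ Suc m)"
  proof (rule Weierstrass_m_test'[OF _ summ_geo[of MD]])
    fix n y assume y: "y \<in> ?S"
    have r: "argf b y i n \<in> {-1..2}" using argf_range[OF b2 i, of y n] y by auto
    have B1: "1 \<le> real b ^ Suc n" using b2 by (intro one_le_power) simp
    have "\<bar>D (argf b y i n)\<bar> / real b ^ Suc n \<le> \<bar>D (argf b y i n)\<bar> / 1"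
      by (rule divide_left_mono) (use B1 in auto)
    also have "\<dots> \<le> MD" using MD r by auto
    finally have "\<bar>D (argf b y i n)\<bar> / real b ^ Suc n \<le> MD" .
    then have "\<gamma> ^ n * (\<bar>D (argf b y i n)\<bar> / real b ^ Suc n) \<le> \<gamma> ^ n * MD"
      by (rule mult_left_mono) (use \<gamma>0 in simp)
    moreover have "norm (\<gamma> ^ n * D (argf b y i n) / real b ^ Suc n) = \<gamma> ^ n * (\<bar>D (argf b y i n)\<bar> / real b ^ Suc n)"
      using \<gamma>0 by (simp add: abs_mult)
    ultimately show "norm (\<gamma> ^ n * D (argf b y i n) / real b ^ Suc n) \<le> \<gamma> ^ n * MD" using b2 by simp
  qed
  have sm: "summable (\<lambda>n. \<gamma> ^ n * \<psi> (argf b 0 i n))"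
  proof (rule summable_comparison_test[OF _ summ_geo[of Mp]])
    show "\<exists>N. \<forall>n\<ge>N. norm (\<gamma> ^ n * \<psi> (argf b 0 i n)) \<le> \<gamma> ^ n * Mp"
    proof (intro exI allI impI)
      fix n
      have r: "argf b 0 i n \<in> {-1..2}" using argf_range[OF b2 i, of 0 n] by auto
      then have "\<gamma> ^ n * \<bar>\<psi> (argf b 0 i n)\<bar> \<le> \<gamma> ^ n * Mp"
        using Mp \<gamma>0 by (intro mult_left_mono) auto
      then show "norm (\<gamma> ^ n * \<psi> (argf b 0 i n)) \<le> \<gamma> ^ n * Mp"
        using \<gamma>0 by (simp add: abs_mult)
    qed
  qed
  have "((\<lambda>y. \<Sum>n. \<gamma> ^ n * \<psi> (argf b y i n)) has_real_derivative
        (\<Sum>n. \<gamma> ^ n * D (argf b x i n) / real b ^ Suc n)) (at x)"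
  proof (rule has_field_derivative_series'(2)[of "{-1<..<2}" "\<lambda>n y. \<gamma>^n * \<psi> (argf b y i n)"
       "\<lambda>n y. \<gamma> ^ n * D (argf b y i n) / real b ^ Suc n" 0 x])
    show "convex {-1<..<2::real}" by (rule convex_real_interval)
    show "\<And>n y. y \<in> {-1<..<2} \<Longrightarrow> ((\<lambda>y. \<gamma>^n * \<psi> (argf b y i n)) has_real_derivative
             \<gamma> ^ n * D (argf b y i n) / real b ^ Suc n) (at y within {-1<..<2})"
      by (rule has_field_derivative_at_within[OF term_deriv])
    show "uniformly_convergent_on {-1<..<2} (\<lambda>n y. \<Sum>m<n. \<gamma> ^ m * D (argf b y i m) / real b ^ Suc m)"
      by (rule uc)
    show "(0::real) \<in> {-1<..<2}" by simp
    show "summable (\<lambda>n. \<gamma> ^ n * \<psi> (argf b 0 i n))" by (rule sm)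
    show "x \<in> interior {-1<..<2}" using x by simp
  qed
  then have d: "deriv (\<lambda>y. \<Sum>n. \<gamma> ^ n * \<psi> (argf b y i n)) x = (\<Sum>n. \<gamma> ^ n * D (argf b x i n) / real b ^ Suc n)"
    by (rule DERIV_imp_deriv)
  have e: "(\<lambda>y. S b \<gamma> \<psi> y i) = (\<lambda>y. \<Sum>n. \<gamma> ^ n * \<psi> (argf b y i n))"
    by (rule ext) (rule S_alt)
  show ?thesis
    unfolding S'_def Gd_def e d ..
qed

end


definition Pw :: "nat \<Rightarrow> nat list \<Rightarrow> (nat \<Rightarrow> nat) set" where
  "Pw b w = PiE UNIV (\<lambda>n. if n < length w then {w ! n} \<inter> {..<b} else {..<b})"

lemma Pw_sub: "i \<in> Pw b w \<Longrightarrow> i n < b"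
proof -
  assume "i \<in> Pw b w"
  then have "i n \<in> (if n < length w then {w ! n} \<inter> {..<b} else {..<b})"
    by (auto simp: Pw_def PiE_iff)
  then show ?thesis by (auto split: if_splits)
qed

lemma Pw_compact: "compact (Pw b w)"
proof -
  have "compactin (product_topology (\<lambda>_. euclidean) UNIV) (Pw b w)"
    unfolding Pw_def compactin_PiE by (auto intro: finite_imp_compact)
  then show ?thesis by (simp add: euclidean_product_topology)
qed

definition Tset :: "nat \<Rightarrow> real \<Rightarrow> (real \<Rightarrow> real) \<Rightarrow> real \<Rightarrow> real \<Rightarrow> nat list \<Rightarrow> nat list
    \<Rightarrow> (real \<times> (nat \<Rightarrow> nat) \<times> (nat \<Rightarrow> nat)) set" where
  "Tset b \<gamma> \<psi> \<epsilon> \<delta> u v = {p. fst p \<in> {0..1} \<and> fst (snd p) \<in> Pw b u \<and> snd (snd p) \<in> Pw b v \<and>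
      tangent b \<gamma> \<psi> \<epsilon> \<delta> (fst p) (fst (snd p)) (snd (snd p))}"

definition Aset where "Aset b \<gamma> \<psi> \<epsilon> \<delta> u v = fst ` Tset b \<gamma> \<psi> \<epsilon> \<delta> u v"

context
  fixes b :: nat and \<gamma> :: real and \<psi> D :: "real \<Rightarrow> real"
  assumes b2: "2 \<le> b" and \<gamma>0: "0 < \<gamma>" and \<gamma>1: "\<gamma> < 1"
    and \<psi>D: "\<And>x. (\<psi> has_real_derivative D x) (at x)"
    and Dcont: "continuous_on UNIV D"
begin

lemma cont_argf: "continuous_on X (\<lambda>p. argf b (fst p) (snd p) m)"
  unfolding argf_def using b2 by (intro continuous_intros) auto

lemma cont_S:
  "continuous_on {p. fst p \<in> {-1..2} \<and> (\<forall>n. snd p n < b)} (\<lambda>p. S b \<gamma> \<psi> (fst p) (snd p))"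
proof -
  let ?A = "{p::real \<times> (nat \<Rightarrow> nat). fst p \<in> {-1..2} \<and> (\<forall>n. snd p n < b)}"
  obtain Mp where Mp: "\<forall>y\<in>{-1..2}. \<bar>\<psi> y\<bar> \<le> Mp"
    using cont_bound[of \<psi>] psi_cont[OF b2 \<gamma>0 \<gamma>1 \<psi>D Dcont] continuous_on_subset by blast
  have ul: "uniform_limit ?A (\<lambda>n p. \<Sum>m<n. \<gamma> ^ m * \<psi> (argf b (fst p) (snd p) m))
      (\<lambda>p. \<Sum>m. \<gamma> ^ m * \<psi> (argf b (fst p) (snd p) m)) sequentially"
  proof (rule Weierstrass_m_test[OF _ summ_geo[OF b2 \<gamma>0 \<gamma>1 \<psi>D Dcont, of Mp]])
    fix n and p :: "real \<times> (nat \<Rightarrow> nat)" assume p: "p \<in> ?A"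
    have r: "argf b (fst p) (snd p) n \<in> {-1..2}" using argf_range[OF b2, of "snd p" "fst p" n] p by auto
    then have "\<gamma> ^ n * \<bar>\<psi> (argf b (fst p) (snd p) n)\<bar> \<le> \<gamma> ^ n * Mp"
      using Mp \<gamma>0 by (intro mult_left_mono) auto
    then show "norm (\<gamma> ^ n * \<psi> (argf b (fst p) (snd p) n)) \<le> \<gamma> ^ n * Mp"
      using \<gamma>0 by (simp add: abs_mult)
  qed
  have "continuous_on ?A (\<lambda>p. \<Sum>m. \<gamma> ^ m * \<psi> (argf b (fst p) (snd p) m))"
  proof (rule uniform_limit_theorem[OF _ ul])
    show "\<forall>\<^sub>F n in sequentially. continuous_on ?A (\<lambda>p. \<Sum>m<n. \<gamma> ^ m * \<psi> (argf b (fst p) (snd p) m))"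
      by (intro always_eventually allI continuous_on_sum continuous_on_mult_left
            continuous_on_compose2[OF psi_cont[OF b2 \<gamma>0 \<gamma>1 \<psi>D Dcont] cont_argf]) auto
  qed simp
  then show ?thesis by (simp add: S_alt)
qed

lemma cont_G:
  "continuous_on {p. fst p \<in> {-1..2} \<and> (\<forall>n. snd p n < b)} (\<lambda>p. Gd b \<gamma> D (fst p) (snd p))"
proof -
  let ?A = "{p::real \<times> (nat \<Rightarrow> nat). fst p \<in> {-1..2} \<and> (\<forall>n. snd p n < b)}"
  obtain MD where MD: "\<forall>y\<in>{-1..2}. \<bar>D y\<bar> \<le> MD"
    using cont_bound[of D] Dcont continuous_on_subset by blast
  have ul: "uniform_limit ?A (\<lambda>n p. \<Sum>m<n. \<gamma> ^ m * D (argf b (fst p) (snd p) m) / real b ^ Suc m)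
      (\<lambda>p. \<Sum>m. \<gamma> ^ m * D (argf b (fst p) (snd p) m) / real b ^ Suc m) sequentially"
  proof (rule Weierstrass_m_test[OF _ summ_geo[OF b2 \<gamma>0 \<gamma>1 \<psi>D Dcont, of MD]])
    fix n and p :: "real \<times> (nat \<Rightarrow> nat)" assume p: "p \<in> ?A"
    have r: "argf b (fst p) (snd p) n \<in> {-1..2}" using argf_range[OF b2, of "snd p" "fst p" n] p by auto
    have B1: "1 \<le> real b ^ Suc n" using b2 by (intro one_le_power) simp
    have "\<bar>D (argf b (fst p) (snd p) n)\<bar> / real b ^ Suc n \<le> \<bar>D (argf b (fst p) (snd p) n)\<bar> / 1"
      by (rule divide_left_mono) (use B1 in auto)
    also have "\<dots> \<le> MD" using MD r by auto
    finally have "\<bar>D (argf b (fst p) (snd p) n)\<bar> / real b ^ Suc n \<le> MD" .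
    then have "\<gamma> ^ n * (\<bar>D (argf b (fst p) (snd p) n)\<bar> / real b ^ Suc n) \<le> \<gamma> ^ n * MD"
      by (rule mult_left_mono) (use \<gamma>0 in simp)
    moreover have "norm (\<gamma> ^ n * D (argf b (fst p) (snd p) n) / real b ^ Suc n) =
        \<gamma> ^ n * (\<bar>D (argf b (fst p) (snd p) n)\<bar> / real b ^ Suc n)"
      using \<gamma>0 by (simp add: abs_mult)
    ultimately show "norm (\<gamma> ^ n * D (argf b (fst p) (snd p) n) / real b ^ Suc n) \<le> \<gamma> ^ n * MD"
      using b2 by simp
  qed
  have "continuous_on ?A (\<lambda>p. \<Sum>m. \<gamma> ^ m * D (argf b (fst p) (snd p) m) / real b ^ Suc m)"
  proof (rule uniform_limit_theorem[OF _ ul])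
    show "\<forall>\<^sub>F n in sequentially. continuous_on ?A (\<lambda>p. \<Sum>m<n. \<gamma> ^ m * D (argf b (fst p) (snd p) m) / real b ^ Suc m)"
      using b2 by (intro always_eventually allI continuous_on_sum continuous_on_divide continuous_on_const
            continuous_on_mult_left continuous_on_compose2[OF Dcont cont_argf]) auto
  qed simp
  then show ?thesis by (simp add: Gd_def)
qed

lemma cont_S':
  "continuous_on {p. fst p \<in> {0..1} \<and> (\<forall>n. snd p n < b)} (\<lambda>p. S' b \<gamma> \<psi> (fst p) (snd p))"
proof -
  have "continuous_on {p. fst p \<in> {0..1} \<and> (\<forall>n. snd p n < b)} (\<lambda>p. Gd b \<gamma> D (fst p) (snd p))"
    by (rule continuous_on_subset[OF cont_G]) auto
  then show ?thesis
    by (rule continuous_on_cong[THEN iffD1, rotated 2])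
       (auto simp: S'_eq[OF b2 \<gamma>0 \<gamma>1 \<psi>D Dcont])
qed

lemma Aset_closed: "closed (Aset b \<gamma> \<psi> \<epsilon> \<delta> u v)"
proof -
  let ?C = "{0..1::real} \<times> (Pw b u \<times> Pw b v)"
  have cC: "compact ?C" by (intro compact_Times Pw_compact) auto
  have sub: "?C \<subseteq> {p. fst p \<in> {0..1} \<and> True}" by auto
  have c1: "continuous_on ?C (\<lambda>p. S b \<gamma> \<psi> (fst p) (fst (snd p)))"
    by (rule continuous_on_compose2[OF cont_S, of _ "\<lambda>p. (fst p, fst (snd p))", simplified])
       (auto intro!: continuous_on_Pair continuous_on_fst continuous_on_snd continuous_on_id dest: Pw_sub)
  have c2: "continuous_on ?C (\<lambda>p. S b \<gamma> \<psi> (fst p) (snd (snd p)))"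
    by (rule continuous_on_compose2[OF cont_S, of _ "\<lambda>p. (fst p, snd (snd p))", simplified])
       (auto intro!: continuous_on_Pair continuous_on_fst continuous_on_snd continuous_on_id dest: Pw_sub)
  have c3: "continuous_on ?C (\<lambda>p. S' b \<gamma> \<psi> (fst p) (fst (snd p)))"
    by (rule continuous_on_compose2[OF cont_S', of _ "\<lambda>p. (fst p, fst (snd p))", simplified])
       (auto intro!: continuous_on_Pair continuous_on_fst continuous_on_snd continuous_on_id dest: Pw_sub)
  have c4: "continuous_on ?C (\<lambda>p. S' b \<gamma> \<psi> (fst p) (snd (snd p)))"
    by (rule continuous_on_compose2[OF cont_S', of _ "\<lambda>p. (fst p, snd (snd p))", simplified])
       (auto intro!: continuous_on_Pair continuous_on_fst continuous_on_snd continuous_on_id dest: Pw_sub)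
  define h1 where "h1 = (\<lambda>p. \<bar>S b \<gamma> \<psi> (fst p) (fst (snd p)) - S b \<gamma> \<psi> (fst p) (snd (snd p))\<bar>)"
  define h2 where "h2 = (\<lambda>p. \<bar>S' b \<gamma> \<psi> (fst p) (fst (snd p)) - S' b \<gamma> \<psi> (fst p) (snd (snd p))\<bar>)"
  have "continuous_on ?C h1" unfolding h1_def by (intro continuous_intros c1 c2)
  then have t1: "closedin (top_of_set ?C) (?C \<inter> h1 -` {..\<epsilon>})" by (rule continuous_closedin_preimage) simp
  have "continuous_on ?C h2" unfolding h2_def by (intro continuous_intros c3 c4)
  then have t2: "closedin (top_of_set ?C) (?C \<inter> h2 -` {..\<delta>})" by (rule continuous_closedin_preimage) simp
  have eq: "Tset b \<gamma> \<psi> \<epsilon> \<delta> u v = (?C \<inter> h1 -` {..\<epsilon>}) \<inter> (?C \<inter> h2 -` {..\<delta>})"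
    unfolding Tset_def h1_def h2_def tangent_def by auto
  have "compact (Tset b \<gamma> \<psi> \<epsilon> \<delta> u v)"
    unfolding eq by (intro closedin_compact[OF cC] closedin_Int t1 t2)
  then have "compact (Aset b \<gamma> \<psi> \<epsilon> \<delta> u v)"
    unfolding Aset_def by (intro compact_continuous_image continuous_on_fst continuous_on_id)
  then show ?thesis by (rule compact_imp_closed)
qed

end


lemma words_finite: "finite (words b q)"
proof -
  have "words b q = {xs. set xs \<subseteq> {..<b} \<and> length xs = q}" by (auto simp: words_def)
  then show ?thesis by (simp add: finite_lists_length_eq)
qed

lemma words_ne: "0 < b \<Longrightarrow> replicate q 0 \<in> words b q"
  by (auto simp: words_def)

lemma mem_Aset: "x \<in> Aset b \<gamma> \<psi> \<epsilon> \<delta> u v \<longleftrightarrow>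
    x \<in> {0..1} \<and> (\<exists>i\<in>Pw b u. \<exists>j\<in>Pw b v. tangent b \<gamma> \<psi> \<epsilon> \<delta> x i j)"
  by (force simp: Aset_def Tset_def image_iff)

lemma concat_Pw: "u \<in> words b q \<Longrightarrow> s \<in> seqs b \<Longrightarrow> concat_seq u s \<in> Pw b u"
  by (auto simp: Pw_def PiE_iff concat_seq_def words_def seqs_def)

lemma Pw_concat: "i \<in> Pw b u \<Longrightarrow> concat_seq u (\<lambda>n. i (n + length u)) = i \<and> (\<lambda>n. i (n + length u)) \<in> seqs b"
proof -
  assume i: "i \<in> Pw b u"
  have "\<And>n. i n \<in> (if n < length u then {u ! n} \<inter> {..<b} else {..<b})"
    using i by (auto simp: Pw_def PiE_iff)
  then show ?thesis
    by (auto simp: concat_seq_def seqs_def fun_eq_iff split: if_splits)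
       (metis IntD1 singletonD, metis Pw_sub i)
qed

lemma Eset_Aset:
  assumes x: "x \<in> {0..<1}" and u: "u \<in> words b q" and v: "v \<in> words b q"
  shows "(u, v) \<in> Eset b \<gamma> \<psi> q x \<epsilon> \<delta> \<longleftrightarrow> x \<in> Aset b \<gamma> \<psi> \<epsilon> \<delta> u v"
proof
  assume "(u, v) \<in> Eset b \<gamma> \<psi> q x \<epsilon> \<delta>"
  then obtain s t where "s \<in> seqs b" "t \<in> seqs b"
    "tangent b \<gamma> \<psi> \<epsilon> \<delta> x (concat_seq u s) (concat_seq v t)"
    by (auto simp: Eset_def)
  then show "x \<in> Aset b \<gamma> \<psi> \<epsilon> \<delta> u v"
    using x u v concat_Pw unfolding mem_Aset by fastforce
next
  assume "x \<in> Aset b \<gamma> \<psi> \<epsilon> \<delta> u v"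
  then obtain i j where i: "i \<in> Pw b u" and j: "j \<in> Pw b v" and t: "tangent b \<gamma> \<psi> \<epsilon> \<delta> x i j"
    unfolding mem_Aset by auto
  have lu: "length u = q" and lv: "length v = q" using u v by (auto simp: words_def)
  show "(u, v) \<in> Eset b \<gamma> \<psi> q x \<epsilon> \<delta>"
    unfolding Eset_def using u v Pw_concat[OF i] Pw_concat[OF j] t
    by auto (metis lu lv)
qed

lemma Eset_sym: "(u, v) \<in> Eset b \<gamma> \<psi> q x \<epsilon> \<delta> \<Longrightarrow> (v, u) \<in> Eset b \<gamma> \<psi> q x \<epsilon> \<delta>"
  unfolding Eset_def tangent_def by (auto simp: abs_minus_commute)

lemma Eset_refl: "0 < b \<Longrightarrow> u \<in> words b q \<Longrightarrow> 0 \<le> \<epsilon> \<Longrightarrow> 0 \<le> \<delta> \<Longrightarrow> (u, u) \<in> Eset b \<gamma> \<psi> q x \<epsilon> \<delta>"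
  unfolding Eset_def tangent_def seqs_def
  by (intro CollectI conjI case_prodI bexI[of _ "\<lambda>_. 0"]) auto



lemma card_le1_eq: "finite L \<Longrightarrow> card L \<le> 1 \<Longrightarrow> u \<in> L \<Longrightarrow> L = {u}"
  using card_le_Suc0_iff_eq[of L] by auto

lemma card_le2_eq: "finite L \<Longrightarrow> card L \<le> 2 \<Longrightarrow> u \<in> L \<Longrightarrow> L = {u} \<or> (\<exists>v. v \<noteq> u \<and> L = {u, v})"
proof -
  assume f: "finite L" and c: "card L \<le> 2" and u: "u \<in> L"
  have "card (L - {u}) \<le> 1" using c u f by (simp add: card_Diff_singleton)
  then have all: "\<forall>a\<in>L-{u}. \<forall>b\<in>L-{u}. a = b" using card_le_Suc0_iff_eq[of "L - {u}"] f by auto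
  show ?thesis
  proof (cases "L - {u} = {}")
    case True then show ?thesis using u by auto
  next
    case False
    then obtain v where v: "v \<in> L - {u}" by auto
    then have "L = {u, v}" using all u by auto
    then show ?thesis using v by auto
  qed
qed

lemma gold: "let p = (sqrt 5 + 1) / 2 in 1 < p \<and> p * p = p + 1"
proof -
  have s: "sqrt 5 * sqrt 5 = 5" by simp
  have "1 < sqrt 5" by (simp add: real_less_rsqrt)
  then show ?thesis using s by (simp add: Let_def algebra_simps)
qed

theorem lemma2p11:
  fixes b :: nat and \<gamma> :: real and \<psi> :: "real \<Rightarrow> real"
    and q :: nat and \<epsilon> \<delta> :: real and K :: "real set"
  assumes b: "2 \<le> b"
    and \<gamma>: "1 / real b < \<gamma>" "\<gamma> < 1"
    and \<psi>_per: "\<And>x. \<psi> (x + 1) = \<psi> x"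
    and \<psi>_C1: "\<psi> C1_differentiable_on UNIV"
    and q: "1 \<le> q"
    and \<epsilon>: "0 < \<epsilon>" and \<delta>: "0 < \<delta>"
    and K_borel: "K \<in> sets borel" and K_sub: "K \<subseteq> {0..<1}"
    and i_K: "\<And>x. x \<in> K \<Longrightarrow> e_num b \<gamma> \<psi> q x \<epsilon> \<delta> \<le> 1"
    and i_notK: "\<And>x. x \<in> {0..<1} - K \<Longrightarrow> e_num b \<gamma> \<psi> q x \<epsilon> \<delta> \<le> 2"
    and ii: "\<And>x u v. x \<in> {0..<1} - K \<Longrightarrow> (u, v) \<in> Eset b \<gamma> \<psi> q x \<epsilon> \<delta> \<Longrightarrow> u \<noteq> v \<Longrightarrow>
               xw b x u \<in> K \<or> xw b x v \<in> K"
  shows "sigma_q b \<gamma> \<psi> q \<le> ereal ((sqrt 5 + 1) / 2)"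
proof -
  obtain D where \<psi>D': "\<forall>x\<in>UNIV. (\<psi> has_vector_derivative D x) (at x)" and Dcont: "continuous_on UNIV D"
    using \<psi>_C1 unfolding C1_differentiable_on_def by blast
  have \<psi>D: "\<And>x. (\<psi> has_real_derivative D x) (at x)"
    using \<psi>D' by (simp add: has_real_derivative_iff_has_vector_derivative)
  have b0: "0 < b" using b by simp
  have \<gamma>0: "0 < \<gamma>" using \<gamma>(1) b by (smt (verit) divide_pos_pos of_nat_0_less_iff b0)
  define p where "p = (sqrt 5 + 1) / 2"
  have p1: "1 < p" and pp: "p * p = p + 1" using gold unfolding p_def Let_def by auto
  have p0: "0 < p" using p1 by simp
  have ipl: "1 / p \<le> p"
  proof -
    have "1 / p < 1" using p1 by simp
    then show ?thesis using p1 by linarith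
  qed
  define A where "A = (\<lambda>u v. Aset b \<gamma> \<psi> \<epsilon> \<delta> u v)"
  have A_borel: "A u v \<in> sets borel" for u v
    unfolding A_def by (intro borel_closed Aset_closed[OF b \<gamma>0 \<gamma>(2) \<psi>D Dcont])
  have EA: "\<And>x u v. x \<in> {0..<1} \<Longrightarrow> u \<in> words b q \<Longrightarrow> v \<in> words b q \<Longrightarrow>
      (u, v) \<in> Eset b \<gamma> \<psi> q x \<epsilon> \<delta> \<longleftrightarrow> x \<in> A u v"
    unfolding A_def by (rule Eset_Aset)
  have Ew: "\<And>x u v. (u, v) \<in> Eset b \<gamma> \<psi> q x \<epsilon> \<delta> \<Longrightarrow> u \<in> words b q \<and> v \<in> words b q"
    by (auto simp: Eset_def)
  define W where "W = (\<lambda>x u v. if u = v then 1 else if xw b x u \<in> K \<and> xw b x v \<notin> K then p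
     else if xw b x u \<notin> K \<and> xw b x v \<in> K then 1 / p else (1::real))"
  define V where "V = (\<lambda>x u v. if x \<in> A u v then W x u v else 0)"
  define \<omega> where "\<omega> = (\<lambda>y::real. if y \<in> K then 1 else 1 / p)"
  have xw_meas: "(\<lambda>x. xw b x u) \<in> borel_measurable borel" for u
    unfolding xw_def using b0 by (intro borel_measurable_continuous_onI continuous_intros) auto
  have K_meas: "{x. xw b x u \<in> K} \<in> sets borel" for u
    using measurable_sets[OF xw_meas K_borel] by (simp add: vimage_def)
  note [measurable] = K_borel xw_meas A_borel
  have V_meas: "(\<lambda>x. V x u v) \<in> borel_measurable borel" for u v
    unfolding V_def W_def by measurable
  have \<omega>_meas: "\<omega> \<in> borel_measurable borel"
    unfolding \<omega>_def by measurable
  have \<omega>xw_meas: "(\<lambda>x. \<omega> (xw b x u)) \<in> borel_measurable borel" for u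
    by (rule measurable_compose[OF xw_meas \<omega>_meas])
  have to_leb: "f \<in> borel_measurable (restrict_space lebesgue {0..<1::real})"
    if "f \<in> borel_measurable borel" for f :: "real \<Rightarrow> real"
    by (intro measurable_restrict_space1 measurable_completion) (simp add: that)
  have Sig_meas: "(\<lambda>x. Sigma_Vw b q V \<omega> x) \<in> borel_measurable borel"
    unfolding Sigma_Vw_def
    by (intro borel_measurable_Max words_finite borel_measurable_times borel_measurable_divide
          borel_measurable_sum \<omega>_meas \<omega>xw_meas V_meas)
  have wf: "weight_fun \<omega>"
    unfolding weight_fun_def
  proof (intro conjI)
    show "\<omega> \<in> borel_measurable (restrict_space lebesgue {0..<1})" by (rule to_leb[OF \<omega>_meas])
    show "\<forall>x\<in>{0..<1}. 0 < \<omega> x" using p0 by (simp add: \<omega>_def)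
    show "\<exists>C. \<forall>x\<in>{0..<1}. \<omega> x \<le> C \<and> 1 / \<omega> x \<le> C"
      using p1 ipl by (intro exI[of _ p]) (auto simp: \<omega>_def)
  qed
  have adm: "admissible_test b \<gamma> \<psi> q V"
    unfolding admissible_test_def
  proof (intro conjI)
    show "\<forall>u\<in>words b q. \<forall>v\<in>words b q. (\<lambda>x. V x u v) \<in> borel_measurable (restrict_space lebesgue {0..<1})"
      using to_leb[OF V_meas] by blast
    show "\<forall>x\<in>{0..<1}. \<forall>u\<in>words b q. \<forall>v\<in>words b q. 0 \<le> V x u v"
      using p0 by (simp add: V_def W_def)
    show "\<exists>\<epsilon>>0. \<exists>\<delta>>0. \<forall>x\<in>{0..<1}. \<forall>(u, v)\<in>Eset b \<gamma> \<psi> q x \<epsilon> \<delta>. 1 \<le> V x u v * V x v u"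
    proof -
      have "\<forall>x\<in>{0..<1}. \<forall>(u, v)\<in>Eset b \<gamma> \<psi> q x \<epsilon> \<delta>. 1 \<le> V x u v * V x v u"
      proof (intro ballI, clarify)
        fix x u v assume x: "x \<in> {0..<1}" and uv: "(u, v) \<in> Eset b \<gamma> \<psi> q x \<epsilon> \<delta>"
        have w: "u \<in> words b q" "v \<in> words b q" using Ew[OF uv] by auto
        have "x \<in> A u v" using EA[OF x w] uv by simp
        moreover have "x \<in> A v u" using EA[OF x w(2) w(1)] Eset_sym[OF uv] by simp
        ultimately show "1 \<le> V x u v * V x v u"
          using p0 by (auto simp: V_def W_def)
      qed
      then show ?thesis using \<epsilon> \<delta> by blast
    qed
  qed
  have bound: "Sigma_Vw b q V \<omega> x \<le> p" if x: "x \<in> {0..<1}" for x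
    unfolding Sigma_Vw_def
  proof (rule Max.boundedI)
    show "finite ((\<lambda>u. \<omega> x / \<omega> (xw b x u) * (\<Sum>v\<in>words b q. V x u v)) ` words b q)"
      by (simp add: words_finite)
    show "(\<lambda>u. \<omega> x / \<omega> (xw b x u) * (\<Sum>v\<in>words b q. V x u v)) ` words b q \<noteq> {}"
      using words_ne[OF b0] by blast
    fix t assume "t \<in> (\<lambda>u. \<omega> x / \<omega> (xw b x u) * (\<Sum>v\<in>words b q. V x u v)) ` words b q"
    then obtain u where u: "u \<in> words b q" and t: "t = \<omega> x / \<omega> (xw b x u) * (\<Sum>v\<in>words b q. V x u v)"
      by auto
    define L where "L = {l. (u, l) \<in> Eset b \<gamma> \<psi> q x \<epsilon> \<delta>}"
    have Lw: "L \<subseteq> words b q" using Ew unfolding L_def by blast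
    have Lf: "finite L" using Lw words_finite finite_subset by blast
    have uL: "u \<in> L" unfolding L_def using Eset_refl[OF b0 u] \<epsilon> \<delta> by simp
    have cardL: "card L \<le> e_num b \<gamma> \<psi> q x \<epsilon> \<delta>"
      unfolding e_num_def L_def using u by (intro Max_ge) (auto simp: words_finite)
    have sumL: "(\<Sum>v\<in>words b q. V x u v) = (\<Sum>v\<in>L. W x u v)"
    proof -
      have "(\<Sum>v\<in>words b q. V x u v) = (\<Sum>v\<in>L. V x u v)"
      proof (rule sum.mono_neutral_right[OF words_finite Lw], rule ballI)
        fix v assume "v \<in> words b q - L"
        then have "x \<notin> A u v" using EA[OF x u] unfolding L_def by auto
        then show "V x u v = 0" by (simp add: V_def)
      qed
      also have "\<dots> = (\<Sum>v\<in>L. W x u v)"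
      proof (rule sum.cong[OF refl])
        fix v assume "v \<in> L"
        then have "x \<in> A u v" using EA[OF x u] Lw unfolding L_def by auto
        then show "V x u v = W x u v" by (simp add: V_def)
      qed
      finally show ?thesis .
    qed
    have ip: "1 / p = p - 1" using pp p0 by (simp add: field_simps)
    show "t \<le> p"
    proof (cases "L = {u}")
      case True
      then have "t = \<omega> x / \<omega> (xw b x u)" using t sumL by (simp add: W_def)
      then show ?thesis using p1 p0 ipl by (auto simp: \<omega>_def)
    next
      case False
      have xK: "x \<notin> K"
      proof
        assume "x \<in> K"
        then have "L = {u}" using card_le1_eq[OF Lf _ uL] cardL i_K by force
        then show False using False by simp
      qed
      then have "card L \<le> 2" using cardL i_notK[of x] x by force
      then obtain v where v: "v \<noteq> u" "L = {u, v}" using card_le2_eq[OF Lf _ uL] False by blast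
      have uv: "(u, v) \<in> Eset b \<gamma> \<psi> q x \<epsilon> \<delta>" using v unfolding L_def by blast
      have cases: "xw b x u \<in> K \<or> xw b x v \<in> K" using ii[OF _ uv v(1)[symmetric]] x xK by auto
      have tt: "t = (1 / p) / \<omega> (xw b x u) * (1 + W x u v)"
        using t sumL v xK by (simp add: W_def \<omega>_def)
      show ?thesis
        using cases v(1) p0 p1 pp ip unfolding tt by (auto simp: W_def \<omega>_def field_simps)
    qed
  qed
  have "esssup (restrict_space lebesgue {0..<1}) (\<lambda>x. ereal (Sigma_Vw b q V \<omega> x)) \<le> ereal p"
  proof (rule esssup_I)
    show "(\<lambda>x. ereal (Sigma_Vw b q V \<omega> x)) \<in> borel_measurable (restrict_space lebesgue {0..<1})"
      using to_leb[OF Sig_meas] by measurable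
    show "AE x in restrict_space lebesgue {0..<1}. ereal (Sigma_Vw b q V \<omega> x) \<le> ereal p"
      using bound by (intro AE_I2) (simp add: space_restrict_space)
  qed
  then show ?thesis
    unfolding sigma_q_def p_def[symmetric]
    by (intro Inf_lower2[OF _ _]) (use wf adm in blast)+
qed


end
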